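(* Let $\Delta,\bar\Delta\in\mathbb{C}^*$ and let $h(\partial,\lambda)=\sum_{i=0}^m a_i\partial^{m-i}\lambda^i\in\mathbb{C}[\partial,\lambda]$ be a nonzero homogeneous polynomial of degree $m$ satisfying $$\big(\tfrac12\lambda-\mu\big)h(\partial,\lambda+\mu)=(\partial+\bar\Delta\lambda)h(\partial+\lambda,\mu)-(\partial+\mu+\Delta\lambda)h(\partial,\mu).$$ Then $a_0\neq0$, $m\in\{0,1,2\}$, and exactly one of the following holds: (i) $\Delta-\bar\Delta=-\tfrac12$ and $h(\partial,\lambda)=a_0$; (ii) $\Delta-\bar\Delta=\tfrac12$ and $h(\partial,\lambda)=a_0(\partial+2\bar\Delta\lambda)$; (iii) $(\Delta,\bar\Delta)=(1,-\tfrac12)$ and $h(\partial,\lambda)=a_0(\partial^2-\lambda^2)$. *)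

theory Defs
  imports Complex_Main
begin

definition hpoly :: "(nat \<Rightarrow> complex) \<Rightarrow> nat \<Rightarrow> complex \<Rightarrow> complex \<Rightarrow> complex" where
  "hpoly a m d l = (\<Sum>i=0..m. a i * d ^ (m - i) * l ^ i)"

end

theory Submission imports Defs "HOL-Computational_Algebra.Polynomial" begin

lemma coeff_lin_pow: "coeff ([:1, b:] ^ n) i = of_nat (n choose i) * (b::complex) ^ i"
proof (cases "i \<le> n")
  case True then show ?thesis using coeff_linear_poly_power[of i n 1 b] by simp
next
  case False
  have "degree ([:1, b:] ^ n) \<le> degree [:1, b:] * n" by (rule degree_power_le)
  also have "degree [:1, b:] * n \<le> 1 * n" by (intro mult_right_mono) auto
  finally have "degree ([:1, b:] ^ n) < i" using False by simp
  then show ?thesis using False by (simp add: coeff_eq_0)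
qed

lemma ch2: "of_nat (m choose 2) = (of_nat m * (of_nat m - 1) / 2 :: complex)"
  by (simp add: binomial_gbinomial gbinomial_pochhammer' pochhammer_Suc numeral_eq_Suc)
lemma ch3: "of_nat (m choose 3) = (of_nat m * (of_nat m - 1) * (of_nat m - 2) / 6 :: complex)"
  by (simp add: binomial_gbinomial gbinomial_pochhammer' pochhammer_Suc numeral_eq_Suc)
lemma ch4: "of_nat (m choose 4) = (of_nat m * (of_nat m - 1) * (of_nat m - 2) * (of_nat m - 3) / 24 :: complex)"
  by (simp add: binomial_gbinomial gbinomial_pochhammer' pochhammer_Suc numeral_eq_Suc)

lemma hpoly_l0: "hpoly a m d 0 = a 0 * d ^ m"
proof -
  have "hpoly a m d 0 = (\<Sum>i=0..m. if i = 0 then a 0 * d ^ m else 0)"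
    unfolding hpoly_def by (rule sum.cong) auto
  then show ?thesis by simp
qed

lemma hpoly_d0: "hpoly a m 0 l = a m * l ^ m"
proof -
  have "hpoly a m 0 l = (\<Sum>i=0..m. if i = m then a m * l ^ m else 0)"
    unfolding hpoly_def by (rule sum.cong) auto
  then show ?thesis by simp
qed

lemma hpoly_1: "hpoly a m 1 l = poly (\<Sum>i\<le>m. monom (a i) i) l"
  unfolding hpoly_def by (simp add: poly_sum poly_monom atLeast0AtMost)

lemma coeff_Hp: "i \<le> m \<Longrightarrow> coeff (\<Sum>j\<le>m. monom (a j) j) i = a i"
  by (simp add: coeff_sum coeff_monom)

lemma polyeq: "(\<And>t. poly p t = poly q t) \<Longrightarrow> p = (q::complex poly)"
  using poly_eq_poly_eq_iff by blast

theorem lemma3p6: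
  fixes D Db :: complex and a :: "nat \<Rightarrow> complex" and m :: nat
  assumes "D \<noteq> 0" and "Db \<noteq> 0"
    and nonzero: "\<exists>i\<le>m. a i \<noteq> 0"
    and eq: "\<And>d l u. (l / 2 - u) * hpoly a m d (l + u)
              = (d + Db * l) * hpoly a m (d + l) u - (d + u + D * l) * hpoly a m d u"
  shows "a 0 \<noteq> 0 \<and> m \<in> {0, 1, 2} \<and>
    (let P1 = (D - Db = - 1/2 \<and> (\<forall>d l. hpoly a m d l = a 0));
         P2 = (D - Db = 1/2 \<and> (\<forall>d l. hpoly a m d l = a 0 * (d + 2 * Db * l)));
         P3 = ((D, Db) = (1, - 1/2) \<and> (\<forall>d l. hpoly a m d l = a 0 * (d\<^sup>2 - l\<^sup>2)))
     in (P1 \<and> \<not> P2 \<and> \<not> P3) \<or> (\<not> P1 \<and> P2 \<and> \<not> P3) \<or> (\<not> P1 \<and> \<not> P2 \<and> P3))"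
proof -
  define h where "h = hpoly a m"
  define Hp where "Hp = (\<Sum>i\<le>m. monom (a i) i)"
  define P where "P = ([:1, 1:] ^ m :: complex poly)"
  define Q where "Q = ([:1, -1:] ^ m :: complex poly)"
  define M where "M = (of_nat m :: complex)"
  have h1: "h 1 t = poly Hp t" for t unfolding h_def Hp_def by (rule hpoly_1)
  have U0: "l * h d l = 2 * a 0 * ((d + Db * l) * (d + l) ^ m - (d + D * l) * d ^ m)" for d l
  proof -
    have "(l / 2 - 0) * h d (l + 0) = (d + Db * l) * h (d + l) 0 - (d + 0 + D * l) * h d 0"
      unfolding h_def by (rule eq)
    then have "l / 2 * h d l = a 0 * ((d + Db * l) * (d + l) ^ m - (d + D * l) * d ^ m)"
      unfolding h_def by (simp add: hpoly_l0 algebra_simps)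
    then show ?thesis by (simp add: field_simps)
  qed
  have a0: "a 0 \<noteq> 0"
  proof
    assume z: "a 0 = 0"
    have "poly ([:0, 1:] * Hp) t = poly 0 t" for t
      using U0[where l=t and d=1] z h1[of t] by simp
    then have "[:0, 1:] * Hp = 0" by (rule polyeq)
    then have "Hp = 0" by simp
    then have "a i = 0" if "i \<le> m" for i using coeff_Hp[OF that, of a] unfolding Hp_def by simp
    then show False using nonzero by blast
  qed
  have A: "D - Db = M - 1/2"
  proof -
    have "poly ([:0, 1:] * Hp) t = poly (smult (2 * a 0) ([:1, Db:] * P - [:1, D:])) t" for t
      using U0[where l=t and d=1] h1[of t] unfolding P_def by (simp add: algebra_simps)
    then have "[:0, 1:] * Hp = smult (2 * a 0) ([:1, Db:] * P - [:1, D:])" by (rule polyeq)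
    then have "coeff ([:0, 1:] * Hp) 1 = coeff (smult (2 * a 0) ([:1, Db:] * P - [:1, D:])) 1" by simp
    then have "a 0 = 2 * a 0 * (M + Db - D)"
      using coeff_Hp[of 0 m a] unfolding P_def Hp_def M_def
      by (simp add: coeff_mult coeff_lin_pow atMost_Suc algebra_simps)
    then have "a 0 * (2 * (D - Db) - 2 * M + 1) = 0" by (simp add: algebra_simps)
    then have "2 * (D - Db) - 2 * M + 1 = 0" using a0 by simp
    then show ?thesis by (simp add: field_simps)
  qed
  have am: "a m = 2 * a 0 * Db" if "m \<ge> 1"
  proof -
    have "h 0 1 = a m" unfolding h_def by (simp add: hpoly_d0)
    moreover have "(0::complex) ^ m = 0" using that by simp
    ultimately show ?thesis using U0[where l=1 and d=0] by simp
  qed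
  have h0: "h 0 x = 2 * a 0 * Db * x ^ m" if "m \<ge> 1" for x
    unfolding h_def using am[OF that] by (simp add: hpoly_d0)
  have B: "M / 2 - 1 = of_nat (m choose 2) + Db * M" if m2: "m \<ge> 2"
  proof -
    have e: "(1/2 - t) * h 0 (1 + t) = Db * h 1 t - (t + D) * h 0 t" for t
      using eq[where d=0 and l=1 and u=t] unfolding h_def by simp
    have e2: "2 * a 0 * Db * (t * (1/2 - t) * (1 + t) ^ m - ((1 + Db * t) * (1 + t) ^ m - (1 + D * t) - (t + D) * t ^ (m + 1))) = 0" for t
    proof -
      have "t * ((1/2 - t) * h 0 (1 + t)) = Db * (t * h 1 t) - (t + D) * t * h 0 t"
        using arg_cong[OF e[of t], of "\<lambda>x. t * x"] by (simp add: algebra_simps)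
      then have "t * ((1/2 - t) * (2 * a 0 * Db * (1 + t) ^ m)) = Db * (2 * a 0 * ((1 + Db * t) * (1 + t) ^ m - (1 + D * t))) - (t + D) * t * (2 * a 0 * Db * t ^ m)"
        using h0[of "1 + t"] h0[of t] U0[where l=t and d=1] m2 by simp
      then show ?thesis by (simp add: algebra_simps)
    qed
    have "poly ([:0, 1/2, -1:] * P) t = poly ([:1, Db:] * P - [:1, D:] - [:D, 1:] * monom 1 (m + 1)) t" for t
    proof -
      have e3: "t * (1/2 - t) * (1 + t) ^ m - ((1 + Db * t) * (1 + t) ^ m - (1 + D * t) - (t + D) * t ^ (m + 1)) = 0"
        using e2[of t] a0 \<open>Db \<noteq> 0\<close> by simp
      have l: "poly ([:0, 1/2, -1:] * P) t = t * (1/2 - t) * (1 + t) ^ m"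
        unfolding P_def by (simp add: algebra_simps)
      have r: "poly ([:1, Db:] * P - [:1, D:] - [:D, 1:] * monom 1 (m + 1)) t = (1 + Db * t) * (1 + t) ^ m - (1 + D * t) - (t + D) * t ^ (m + 1)"
        unfolding P_def by (simp add: poly_monom algebra_simps)
      show ?thesis unfolding l r using e3 by simp
    qed
    then have "[:0, 1/2, -1:] * P = [:1, Db:] * P - [:1, D:] - [:D, 1:] * monom 1 (m + 1)" by (rule polyeq)
    then have "coeff ([:0, 1/2, -1:] * P) 2 = coeff ([:1, Db:] * P - [:1, D:] - [:D, 1:] * monom 1 (m + 1)) 2" by simp
    then show ?thesis using m2 unfolding P_def M_def
      by (simp add: coeff_mult coeff_lin_pow numeral_eq_Suc atMost_Suc coeff_monom algebra_simps)
  qed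
  have C: "M * (M - 1) * (M - 1 + 2 * Db) * (M - 2 + 2 * Db) = 0"
  proof -
    have e: "(t / 2 - - t) * h 1 (t + - t) = (1 + Db * t) * h (1 + t) (- t) - (1 + - t + D * t) * h 1 (- t)" for t
      using eq[where d=1 and l=t and u="-t"] unfolding h_def by simp
    have e2: "2 * a 0 * (- (3/4) * t ^ 2 - ((1 + Db * t) * ((1 + t - Db * t) - (1 + t - D * t) * (1 + t) ^ m)
         - (1 - t + D * t) * ((1 - Db * t) * (1 - t) ^ m - (1 - D * t)))) = 0" for t
    proof -
      have "(- t) * ((t / 2 - - t) * h 1 (t + - t)) = (1 + Db * t) * ((- t) * h (1 + t) (- t)) - (1 + - t + D * t) * ((- t) * h 1 (- t))"
        using arg_cong[OF e[of t], of "\<lambda>x. (- t) * x"] by (simp add: algebra_simps)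
      note ee = this
      have u1: "(- t) * h (1 + t) (- t) = 2 * a 0 * ((1 + t - Db * t) - (1 + t - D * t) * (1 + t) ^ m)"
        using U0[where d="1 + t" and l="- t"] by (simp add: algebra_simps)
      have u2: "(- t) * h 1 (- t) = 2 * a 0 * ((1 - Db * t) * (1 - t) ^ m - (1 - D * t))"
        using U0[where d=1 and l="- t"] by (simp add: algebra_simps)
      have hh: "h 1 (t + - t) = a 0" unfolding h_def by (simp add: hpoly_l0)
      have "(- t) * ((t / 2 - - t) * a 0) = (1 + Db * t) * (2 * a 0 * ((1 + t - Db * t) - (1 + t - D * t) * (1 + t) ^ m))
          - (1 + - t + D * t) * (2 * a 0 * ((1 - Db * t) * (1 - t) ^ m - (1 - D * t)))"
        using ee unfolding u1 u2 hh .
      then show ?thesis by (simp add: algebra_simps power2_eq_square)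
    qed
    define L :: "complex poly" where "L = smult (- 3/4) [:0, 0, 1:]"
    define R where "R = [:1, Db:] * ([:1, 1 - Db:] - [:1, 1 - D:] * P) - [:1, D - 1:] * ([:1, - Db:] * Q - [:1, - D:])"
    have "poly L t = poly R t" for t
    proof -
      have e3: "- (3/4) * t ^ 2 - ((1 + Db * t) * ((1 + t - Db * t) - (1 + t - D * t) * (1 + t) ^ m)
         - (1 - t + D * t) * ((1 - Db * t) * (1 - t) ^ m - (1 - D * t))) = 0"
        using e2[of t] a0 by simp
      have l: "poly L t = - (3/4) * t ^ 2" unfolding L_def by (simp add: power2_eq_square)
      have r: "poly R t = (1 + Db * t) * ((1 + t - Db * t) - (1 + t - D * t) * (1 + t) ^ m)
         - (1 - t + D * t) * ((1 - Db * t) * (1 - t) ^ m - (1 - D * t))"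
        unfolding R_def P_def Q_def by (simp add: algebra_simps)
      show ?thesis unfolding l r using e3 by simp
    qed
    then have "L = R" by (rule polyeq)
    then have "coeff L 4 = coeff R 4" by simp
    then have c4: "0 = Db * (- of_nat (m choose 3) - (1 - D) * of_nat (m choose 2)) +
       (- (Db * of_nat (m choose 3)) - (D - 1) * (- of_nat (m choose 3) - Db * of_nat (m choose 2))) -
       (1 - D) * of_nat (m choose 3) - 2 * of_nat (m choose 4)"
      unfolding L_def R_def P_def Q_def
      by (simp add: coeff_mult coeff_lin_pow numeral_eq_Suc atMost_Suc)
    have DD: "D = Db + M - 1/2" using A by (simp add: algebra_simps)
    have "Db * (- of_nat (m choose 3) - (1 - D) * of_nat (m choose 2)) +
       (- (Db * of_nat (m choose 3)) - (D - 1) * (- of_nat (m choose 3) - Db * of_nat (m choose 2))) -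
       (1 - D) * of_nat (m choose 3) - 2 * of_nat (m choose 4) = (1/4) * (M * (M - 1) * (M - 1 + 2 * Db) * (M - 2 + 2 * Db))"
      unfolding DD ch2 ch3 ch4 M_def[symmetric]
      by (simp add: field_simps)
    with c4 show ?thesis by simp
  qed
  have mle: "m \<le> 2"
  proof (rule ccontr)
    assume "\<not> m \<le> 2"
    then have m3: "m \<ge> 3" by simp
    have k: "2 * Db * M = - (M * M) + 2 * M - 2"
    proof -
      have "M * 4 = 4 + (M * (M * 2) + Db * (M * 4))"
        using B m3 unfolding ch2 M_def[symmetric] by (simp add: field_simps)
      then show ?thesis by algebra
    qed
    have k1: "(M - 1 + 2 * Db) * M = M - 2" using k by (simp add: algebra_simps power2_eq_square)
    have k2: "(M - 2 + 2 * Db) * M = - 2" using k by (simp add: algebra_simps power2_eq_square)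
    have "M * (M - 1) * ((M - 1 + 2 * Db) * M) * ((M - 2 + 2 * Db) * M) = 0"
    proof -
      have "M * (M - 1) * ((M - 1 + 2 * Db) * M) * ((M - 2 + 2 * Db) * M) = M * M * (M * (M - 1) * (M - 1 + 2 * Db) * (M - 2 + 2 * Db))"
        by (simp add: algebra_simps)
      then show ?thesis using C by simp
    qed
    then have "M * (M - 1) * (M - 2) = 0" unfolding k1 k2 by simp
    then have "M = 0 \<or> M = 1 \<or> M = 2" by simp
    then have "m = 0 \<or> m = 1 \<or> m = 2" unfolding M_def
      by (metis of_nat_0_eq_iff of_nat_1_eq_iff of_nat_eq_iff of_nat_numeral)
    then show False using m3 by auto
  qed
  consider "m = 0" | "m = 1" | "m = 2" using mle by linarith
  then show ?thesis
  proof cases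
    case 1
    have hp: "hpoly a m d l = a 0" for d l unfolding 1 hpoly_def by simp
    have e: "D - Db = - 1/2" using A unfolding M_def 1 by simp
    have dd: "D = Db - 1/2" using e by (metis add.commute diff_eq_eq diff_conv_add_uminus minus_divide_left)
    show ?thesis using a0 1 hp unfolding Let_def dd by auto
  next
    case 2
    have hp: "hpoly a m d l = a 0 * (d + 2 * Db * l)" for d l
      using am 2 unfolding 2 hpoly_def by (simp add: algebra_simps)
    have e: "D - Db = 1/2" using A unfolding M_def 2 by simp
    have dd: "D = Db + 1/2" using e by (metis add.commute diff_eq_eq)
    show ?thesis using a0 2 hp unfolding Let_def dd by auto
  next
    case 3
    have "M / 2 - 1 = 1 + Db * M" using B 3 by (simp add: M_def)
    then have "1 + Db * 2 = 0" unfolding M_def 3 by (simp add: field_simps)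
    then have db: "Db = - 1/2" by algebra
    have d: "D = 1" using A db unfolding M_def 3 by (simp add: field_simps)
    have a2: "a 2 = - a 0" using am 3 db by simp
    have "h 1 1 = 2 * a 0 * ((1 + Db) * 2 ^ 2 - (1 + D))" using U0[where d=1 and l=1] 3 by simp
    then have "a 0 + a 1 + a 2 = 0" unfolding h_def 3 hpoly_def db d by (simp add: numeral_eq_Suc)
    then have a1: "a 1 = 0" using a2 by simp
    have hp: "hpoly a m d l = a 0 * (d\<^sup>2 - l\<^sup>2)" for d l
      unfolding 3 hpoly_def using a1 a2 by (simp add: numeral_eq_Suc algebra_simps power2_eq_square)
    show ?thesis using a0 3 hp unfolding Let_def d db by auto
  qed
qed
end
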